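(* Every satisfiable set $\Phi\subseteq\mathrm{FO}\cup\sim\mathrm{FO}$ is satisfied (in first-order team semantics) by a team of cardinality $|\Phi\cap\sim\mathrm{FO}|$. In particular the team can always be chosen countable.
   Context: First-order team semantics: $(\mathcal{A},T)\models\alpha$ for $\alpha\in\mathrm{FO}$ iff $(\mathcal{A},s)\models\alpha$ for all $s\in T$; $(\mathcal{A},T)\models\sim\varphi$ iff $(\mathcal{A},T)\not\models\varphi$; $\sim\mathrm{FO}=\{\sim\alpha\mid\alpha\in\mathrm{FO}\}$ is a fragment of the Boolean closure $\mathcal{B}(\mathrm{FO})$ (closure under $\sim$ and material implication). This generalizes the empty team property (every $\Phi\subseteq\mathrm{FO}$ is satisfied by the empty team). *)

theory Defs
  imports Main "HOL-Library.Countable_Set"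
begin

datatype ('f, 'v) trm = Var 'v | Fn 'f "('f, 'v) trm list"

datatype ('f, 'r, 'v) fm =
    Eq "('f, 'v) trm" "('f, 'v) trm"
  | Rel 'r "('f, 'v) trm list"
  | Neg "('f, 'r, 'v) fm"
  | Conj "('f, 'r, 'v) fm" "('f, 'r, 'v) fm"
  | Disj "('f, 'r, 'v) fm" "('f, 'r, 'v) fm"
  | Ex 'v "('f, 'r, 'v) fm"
  | All 'v "('f, 'r, 'v) fm"

text \<open>A structure with universe the (nonempty) type 'a.\<close>
record ('a, 'f, 'r) struct =
  funs :: "'f \<Rightarrow> 'a list \<Rightarrow> 'a"
  rels :: "'r \<Rightarrow> 'a list \<Rightarrow> bool"

primrec teval :: "('a, 'f, 'r) struct \<Rightarrow> ('v \<Rightarrow> 'a) \<Rightarrow> ('f, 'v) trm \<Rightarrow> 'a" where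
  "teval M s (Var x) = s x"
| "teval M s (Fn f ts) = funs M f (map (teval M s) ts)"

primrec sat :: "('a, 'f, 'r) struct \<Rightarrow> ('v \<Rightarrow> 'a) \<Rightarrow> ('f, 'r, 'v) fm \<Rightarrow> bool" where
  "sat M s (Eq t u) = (teval M s t = teval M s u)"
| "sat M s (Rel R ts) = rels M R (map (teval M s) ts)"
| "sat M s (Neg \<phi>) = (\<not> sat M s \<phi>)"
| "sat M s (Conj \<phi> \<psi>) = (sat M s \<phi> \<and> sat M s \<psi>)"
| "sat M s (Disj \<phi> \<psi>) = (sat M s \<phi> \<or> sat M s \<psi>)"
| "sat M s (Ex x \<phi>) = (\<exists>a. sat M (s(x := a)) \<phi>)"
| "sat M s (All x \<phi>) = (\<forall>a. sat M (s(x := a)) \<phi>)"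

text \<open>Boolean closure B(FO): FO formulas, Boolean negation \<sim>, material implication.\<close>
datatype ('f, 'r, 'v) bfm =
    FO "('f, 'r, 'v) fm"
  | BNot "('f, 'r, 'v) bfm"
  | BImp "('f, 'r, 'v) bfm" "('f, 'r, 'v) bfm"

primrec tsat :: "('a, 'f, 'r) struct \<Rightarrow> ('v \<Rightarrow> 'a) set \<Rightarrow> ('f, 'r, 'v) bfm \<Rightarrow> bool" where
  "tsat M T (FO \<alpha>) = (\<forall>s\<in>T. sat M s \<alpha>)"
| "tsat M T (BNot \<phi>) = (\<not> tsat M T \<phi>)"
| "tsat M T (BImp \<phi> \<psi>) = (tsat M T \<phi> \<longrightarrow> tsat M T \<psi>)"

definition FOset :: "('f, 'r, 'v) bfm set" where
  "FOset = range FO"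

definition negFOset :: "('f, 'r, 'v) bfm set" where
  "negFOset = {BNot (FO \<alpha>) | \<alpha>. True}"

end

theory Submission
  imports Defs "HOL-Library.Countable"
begin

instance trm :: (countable, countable) countable
  by countable_datatype
instance fm :: (countable, countable, countable) countable
  by countable_datatype

lemma map_trm_inj: "inj f \<Longrightarrow> inj v \<Longrightarrow> inj (map_trm f v)"
  by (simp add: trm.inj_map)

lemma countable_fm:
  assumes "countable (UNIV :: 'f set)" "countable (UNIV :: 'r set)" "countable (UNIV :: 'v set)"
  shows "countable (UNIV :: ('f,'r,'v) fm set)"
proof -
  let ?h = "map_fm (to_nat_on (UNIV :: 'f set)) (to_nat_on (UNIV :: 'r set)) (to_nat_on (UNIV :: 'v set))"
  have "inj ?h"
    by (rule fm.inj_map) (simp_all add: assms inj_on_to_nat_on)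
  then show ?thesis
    using countable_image_inj_on[of ?h UNIV] by (meson countableI_type inj_on_subset subset_UNIV countable_image_inj_on)
qed

theorem mainTheorem6:
  fixes \<Phi> :: "('f, 'r, 'v) bfm set"
  assumes "\<Phi> \<subseteq> FOset \<union> negFOset"
    and "\<exists>(M :: ('a, 'f, 'r) struct) (T :: ('v \<Rightarrow> 'a) set). \<forall>\<phi>\<in>\<Phi>. tsat M T \<phi>"
  shows "\<exists>(M :: ('a, 'f, 'r) struct) (T :: ('v \<Rightarrow> 'a) set).
           (\<forall>\<phi>\<in>\<Phi>. tsat M T \<phi>)
         \<and> (\<exists>g. T \<subseteq> g ` (\<Phi> \<inter> negFOset))
         \<and> ((countable (UNIV :: 'f set) \<and> countable (UNIV :: 'r set) \<and> countable (UNIV :: 'v set))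
              \<longrightarrow> countable T)"
proof -
  from assms(2) obtain M :: "('a, 'f, 'r) struct" and T :: "('v \<Rightarrow> 'a) set"
    where MT: "\<forall>\<phi>\<in>\<Phi>. tsat M T \<phi>" by blast
  define g where "g = (\<lambda>\<phi>. SOME s. s \<in> T \<and> (\<forall>\<alpha>. \<phi> = BNot (FO \<alpha>) \<longrightarrow> \<not> sat M s \<alpha>))"
  let ?N = "\<Phi> \<inter> negFOset"
  have gN: "g \<phi> \<in> T \<and> \<not> sat M (g \<phi>) \<alpha>" if H: "\<phi> \<in> \<Phi>" "\<phi> = BNot (FO \<alpha>)" for \<phi> \<alpha>
  proof -
    from MT that have "\<exists>s\<in>T. \<not> sat M s \<alpha>" by fastforce
    then obtain s where "s \<in> T \<and> (\<forall>\<alpha>. \<phi> = BNot (FO \<alpha>) \<longrightarrow> \<not> sat M s \<alpha>)"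
      using H(2) by auto
    then have "g \<phi> \<in> T \<and> (\<forall>\<beta>. \<phi> = BNot (FO \<beta>) \<longrightarrow> \<not> sat M (g \<phi>) \<beta>)"
      unfolding g_def by (rule someI[where P="\<lambda>s. s \<in> T \<and> (\<forall>\<alpha>. \<phi> = BNot (FO \<alpha>) \<longrightarrow> \<not> sat M s \<alpha>)"])
    then show ?thesis using that by auto
  qed
  have sub: "g ` ?N \<subseteq> T" using gN unfolding negFOset_def by blast
  have "\<forall>\<phi>\<in>\<Phi>. tsat M (g ` ?N) \<phi>"
  proof
    fix \<phi> assume p: "\<phi> \<in> \<Phi>"
    then consider \<alpha> where "\<phi> = FO \<alpha>" | \<alpha> where "\<phi> = BNot (FO \<alpha>)"
      using assms(1) unfolding FOset_def negFOset_def by blast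
    then show "tsat M (g ` ?N) \<phi>"
    proof cases
      case (1 \<alpha>)
      have "tsat M T \<phi>" using MT p by blast
      then show ?thesis using 1 sub by auto
    next
      case (2 \<alpha>)
      then have "\<phi> \<in> ?N" using p unfolding negFOset_def by blast
      then show ?thesis using gN[OF p 2] 2 by auto
    qed
  qed
  moreover have "countable (g ` ?N)"
    if c: "countable (UNIV :: 'f set)" "countable (UNIV :: 'r set)" "countable (UNIV :: 'v set)"
  proof -
    have "countable (UNIV :: ('f,'r,'v) fm set)" using countable_fm c by blast
    then have "countable (FO ` UNIV :: ('f,'r,'v) bfm set)" by blast
    then have "countable (BNot ` FO ` UNIV :: ('f,'r,'v) bfm set)" by blast
    moreover have "?N \<subseteq> BNot ` FO ` UNIV" unfolding negFOset_def by blast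
    ultimately show ?thesis by (meson countable_image countable_subset)
  qed
  ultimately show ?thesis by blast
qed

end
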